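(* Let $X$ be an infinite-dimensional complex Banach space and let $F \in \mathcal{B}(X)$ with $F^{n}$ of finite rank for some $n \in \mathbb{N}$. If $T \in \mathcal{B}(X)$ is upper semi-B-Fredholm and commutes with $F$, then $T+F$ is also upper semi-B-Fredholm.
   Context: $\mathcal{B}(X)$ is the algebra of bounded linear operators on $X$. An operator $S$ is upper semi-Fredholm if $\mathcal{R}(S)$ is closed and $\dim\mathcal{N}(S)<\infty$. $S$ is upper semi-B-Fredholm if there is $n\in\mathbb{N}$ such that $\mathcal{R}(S^n)$ is closed and the restriction $S_n$ of $S$ to $\mathcal{R}(S^n)$, viewed as a map $\mathcal{R}(S^n)\to\mathcal{R}(S^n)$, is upper semi-Fredholm. *)

theory Defs
  imports "HOL-Analysis.Analysis"
begin

text \<open>A complex Banach space is modelled as a real Banach space (type class banach)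
  together with a complex structure J (multiplication by the imaginary unit),
  compatible with the norm: for every complex scalar of modulus one,
  cos t + i sin t, scaling preserves the norm.\<close>

definition complex_structure :: "('a::banach \<Rightarrow> 'a) \<Rightarrow> bool" where
  "complex_structure J \<longleftrightarrow> linear J \<and> (\<forall>x. J (J x) = - x) \<and>
     (\<forall>x t. norm (cos t *\<^sub>R x + sin t *\<^sub>R J x) = norm x)"

definition bounded_op :: "('a::banach \<Rightarrow> 'a) \<Rightarrow> ('a \<Rightarrow> 'a) \<Rightarrow> bool" where
  "bounded_op J T \<longleftrightarrow> bounded_linear T \<and> (\<forall>x. T (J x) = J (T x))"

text \<open>Finite-dimensional subset (finite real dimension, equivalent to finite complex dimension).\<close>
definition fin_dim :: "'a::real_vector set \<Rightarrow> bool" where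
  "fin_dim S \<longleftrightarrow> (\<exists>B. finite B \<and> S \<subseteq> span B)"

definition upper_semi_fredholm_on :: "'a::real_normed_vector set \<Rightarrow> ('a \<Rightarrow> 'a) \<Rightarrow> bool" where
  "upper_semi_fredholm_on V T \<longleftrightarrow>
     closedin (top_of_set V) (T ` V) \<and> fin_dim {x \<in> V. T x = 0}"

definition upper_semi_fredholm :: "('a::real_normed_vector \<Rightarrow> 'a) \<Rightarrow> bool" where
  "upper_semi_fredholm T \<longleftrightarrow> upper_semi_fredholm_on UNIV T"

definition upper_semi_B_fredholm :: "('a::real_normed_vector \<Rightarrow> 'a) \<Rightarrow> bool" where
  "upper_semi_B_fredholm T \<longleftrightarrow>
     (\<exists>n. closed (range (T ^^ n)) \<and> upper_semi_fredholm_on (range (T ^^ n)) T)"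

end

theory Submission
  imports Defs
begin


lemma baire_ball:
  fixes Y :: "'a::banach set" and C :: "nat \<Rightarrow> 'a set"
  assumes "closed Y" "Y \<noteq> {}" "\<And>k. closed (C k)" "\<And>k. C k \<subseteq> Y" "Y \<subseteq> (\<Union>k. C k)"
  shows "\<exists>k y0 r. y0 \<in> Y \<and> r > 0 \<and> Y \<inter> ball y0 r \<subseteq> C k"
proof (rule ccontr)
  assume H: "\<not> ?thesis"
  let ?X = "top_of_set Y"
  have cm: "completely_metrizable_space ?X"
    using completely_metrizable_space_closedin[OF completely_metrizable_space_euclidean, of Y] assms(1)
    by simp
  have "?X interior_of \<Union>(range C) = {}"
  proof (rule Baire_category_alt)
    show "completely_metrizable_space ?X \<or> locally_compact_space ?X \<and> regular_space ?X" using cm by blast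
    show "countable (range C)" by simp
    fix T assume "T \<in> range C"
    then obtain k where k: "T = C k" by blast
    show "closedin ?X T \<and> ?X interior_of T = {}"
    proof
      show "closedin ?X T" using k assms(3,4) by (simp add: closedin_closed_Int Int_absorb1 closed_subset)
      show "?X interior_of T = {}"
      proof (rule ccontr)
        assume "?X interior_of T \<noteq> {}"
        then obtain y0 where y0: "y0 \<in> ?X interior_of T" by blast
        have op: "openin ?X (?X interior_of T)" by simp
        then obtain U where U: "open U" "?X interior_of T = Y \<inter> U" by (meson openin_open)
        with y0 have "y0 \<in> U" "y0 \<in> Y" by auto
        then obtain r where r: "r > 0" "ball y0 r \<subseteq> U" using U(1) open_contains_ball by blast
        have "Y \<inter> ball y0 r \<subseteq> C k" using r U interior_of_subset[of ?X T] k by blast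
        with H \<open>y0 \<in> Y\<close> r show False by blast
      qed
    qed
  qed
  moreover have "\<Union>(range C) = Y" using assms(4,5) by blast
  moreover have "?X interior_of Y = Y" by (simp add: interior_of_openin)
  ultimately show False using assms(2) by simp
qed



lemma om_approx:
  fixes A :: "'a::banach \<Rightarrow> 'b::banach"
  assumes A: "bounded_linear A" and V: "closed V" "subspace V" and Y: "closed (A ` V)"
  shows "\<exists>c>0. \<forall>y\<in>A ` V. \<forall>e>0. \<exists>x\<in>V. norm x \<le> c * norm y \<and> norm (y - A x) < e"
proof -
  interpret A: bounded_linear A by fact
  define Y where "Y = A ` V"
  define C where "C k = closure (A ` (V \<inter> cball 0 (real k)))" for k
  have "0 \<in> V" using V(2) by (simp add: subspace_0)
  have Yne: "Y \<noteq> {}" using \<open>0 \<in> V\<close> Y_def by blast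
  have CY: "C k \<subseteq> Y" for k unfolding C_def Y_def using Y by (intro closure_minimal) auto
  have YC: "Y \<subseteq> (\<Union>k. C k)"
  proof
    fix y assume "y \<in> Y"
    then obtain x where x: "x \<in> V" "y = A x" by (auto simp: Y_def)
    obtain k :: nat where "norm x \<le> real k" using real_arch_simple by blast
    then have "y \<in> C k" using x closure_subset unfolding C_def by fastforce
    then show "y \<in> (\<Union>k. C k)" by blast
  qed
  obtain k y0 r where k: "y0 \<in> Y" "r > 0" "Y \<inter> ball y0 r \<subseteq> C k"
    using baire_ball[of Y C] Y Yne CY YC unfolding Y_def C_def by blast
  have small: "\<exists>x\<in>V. norm x \<le> 2 * real k \<and> norm (y - A x) < e"
    if y: "y \<in> Y" "norm y < r" and e: "e > 0" for y e
  proof -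
    have "y0 + y \<in> Y" using y k(1) V(2) unfolding Y_def
      by (metis (no_types, lifting) A.add image_iff subspace_add)
    moreover have "y0 + y \<in> ball y0 r" using y by (simp add: dist_norm)
    ultimately have "y0 + y \<in> C k" using k by blast
    then obtain x1 where x1: "x1 \<in> V \<inter> cball 0 (real k)" "dist (A x1) (y0 + y) < e/2"
      unfolding C_def closure_approachable using e by (metis half_gt_zero image_iff)
    have "y0 \<in> C k" using k by (simp add: subsetD)
    then obtain x2 where x2: "x2 \<in> V \<inter> cball 0 (real k)" "dist (A x2) y0 < e/2"
      unfolding C_def closure_approachable using e by (metis half_gt_zero image_iff)
    have "x1 - x2 \<in> V" using x1 x2 V(2) by (simp add: subspace_diff)
    moreover have "norm (x1 - x2) \<le> 2 * real k"
      using x1 x2 norm_triangle_ineq4[of x1 x2] by simp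
    moreover have "norm (y - A (x1 - x2)) < e"
    proof -
      have "y - A (x1 - x2) = (y0 + y - A x1) + (A x2 - y0)" by (simp add: A.diff algebra_simps)
      then have "norm (y - A (x1 - x2)) \<le> norm (y0 + y - A x1) + norm (A x2 - y0)"
        by (metis norm_triangle_ineq)
      also have "\<dots> < e/2 + e/2" using x1(2) x2(2) by (simp add: dist_norm norm_minus_commute add_strict_mono)
      finally show ?thesis by simp
    qed
    ultimately show ?thesis by blast
  qed
  define c where "c = 4 * real k / r + 1"
  have c: "c > 0" using k(2) by (simp add: c_def add_nonneg_pos)
  show ?thesis
  proof (intro exI[of _ c] conjI c ballI allI impI)
    fix y e assume y: "y \<in> A ` V" and e: "(e::real) > 0"
    show "\<exists>x\<in>V. norm x \<le> c * norm y \<and> norm (y - A x) < e"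
    proof (cases "y = 0")
      case True
      then show ?thesis using \<open>0 \<in> V\<close> e by (intro bexI[of _ 0]) auto
    next
      case False
      define s where "s = r / (2 * norm y)"
      have s: "s > 0" using False k(2) by (simp add: s_def)
      obtain x0 where x0: "x0 \<in> V" "y = A x0" using y by auto
      have "s *\<^sub>R y = A (s *\<^sub>R x0)" "s *\<^sub>R x0 \<in> V"
        using x0 V(2) by (simp_all add: A.scaleR subspace_scale)
      then have "s *\<^sub>R y \<in> Y" unfolding Y_def by blast
      moreover have "norm (s *\<^sub>R y) < r" using False k(2) s by (simp add: s_def)
      ultimately obtain x' where x': "x' \<in> V" "norm x' \<le> 2 * real k" "norm (s *\<^sub>R y - A x') < s * e"
        using small[of "s *\<^sub>R y" "s * e"] s e by auto
      define x where "x = (1/s) *\<^sub>R x'"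
      have "x \<in> V" using x' V(2) by (simp add: x_def subspace_scale)
      moreover have "norm x \<le> c * norm y"
      proof -
        have "norm x = norm x' / s" using s by (simp add: x_def)
        also have "\<dots> \<le> 2 * real k / s" using x' s by (simp add: divide_right_mono)
        also have "\<dots> = 4 * real k / r * norm y" using False k(2) by (simp add: s_def field_simps)
        also have "\<dots> \<le> c * norm y" unfolding c_def by (simp add: distrib_right)
        finally show ?thesis .
      qed
      moreover have "norm (y - A x) < e"
      proof -
        have "y - A x = (1/s) *\<^sub>R (s *\<^sub>R y - A x')" using s by (simp add: x_def A.scaleR algebra_simps)
        then have "norm (y - A x) = norm (s *\<^sub>R y - A x') / s" using s by simp
        also have "\<dots> < e" using x' s by (simp add: divide_less_eq mult.commute)
        finally show ?thesis .
      qed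
      ultimately show ?thesis by blast
    qed
  qed
qed



lemma open_mapping:
  fixes A :: "'a::banach \<Rightarrow> 'b::banach"
  assumes A: "bounded_linear A" and V: "closed V" "subspace V" and Y: "closed (A ` V)"
  shows "\<exists>C>0. \<forall>y\<in>A ` V. \<exists>x\<in>V. A x = y \<and> norm x \<le> C * norm y"
proof -
  interpret A: bounded_linear A by fact
  obtain c where c: "c > 0" and ap: "\<And>y e. y \<in> A ` V \<Longrightarrow> e > 0 \<Longrightarrow> \<exists>x\<in>V. norm x \<le> c * norm y \<and> norm (y - A x) < e"
    using om_approx[OF assms] by blast
  have "0 \<in> V" using V(2) by (simp add: subspace_0)
  show ?thesis
  proof (intro exI[of _ "2 * c"] conjI ballI)
    show "0 < 2 * c" using c by simp
  next
    fix y assume y: "y \<in> A ` V"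
    show "\<exists>x\<in>V. A x = y \<and> norm x \<le> 2 * c * norm y"
    proof (cases "y = 0")
      case True then show ?thesis using \<open>0 \<in> V\<close> by (intro bexI[of _ 0]) auto
    next
      case False
      then have ny: "norm y > 0" by simp
      define g where "g z i = (SOME x. x \<in> V \<and> norm x \<le> c * norm z \<and> norm (z - A x) < norm y / 2 ^ Suc i)" for z i
      have g: "g z i \<in> V \<and> norm (g z i) \<le> c * norm z \<and> norm (z - A (g z i)) < norm y / 2 ^ Suc i"
        if "z \<in> A ` V" for z i
      proof -
        have "\<exists>x. x \<in> V \<and> norm x \<le> c * norm z \<and> norm (z - A x) < norm y / 2 ^ Suc i"
          using ap[OF that, of "norm y / 2 ^ Suc i"] ny by auto
        then show ?thesis unfolding g_def by (rule someI_ex)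
      qed
      define res where "res = rec_nat y (\<lambda>i z. z - A (g z i))"
      have res0: "res 0 = y" and resS: "res (Suc i) = res i - A (g (res i) i)" for i
        by (simp_all add: res_def)
      have resP: "res i \<in> A ` V \<and> norm (res i) \<le> norm y / 2 ^ i" for i
      proof (induction i)
        case 0 then show ?case using y res0 by simp
      next
        case (Suc i)
        then obtain w where w: "w \<in> V" "res i = A w" by auto
        have gi: "g (res i) i \<in> V" "norm (res i - A (g (res i) i)) < norm y / 2 ^ Suc i"
          using g[of "res i" i] Suc by auto
        have "res (Suc i) = A (w - g (res i) i)" using w by (simp add: resS A.diff)
        moreover have "w - g (res i) i \<in> V" using w gi V(2) by (simp add: subspace_diff)
        ultimately have "res (Suc i) \<in> A ` V" by blast
        moreover have "norm (res (Suc i)) \<le> norm y / 2 ^ Suc i" using gi resS by simp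
        ultimately show ?case by blast
      qed
      define xs where "xs i = g (res i) i" for i
      have xsV: "xs i \<in> V" for i using g resP by (simp add: xs_def)
      have xsN: "norm (xs i) \<le> c * norm y * (1/2) ^ i" for i
      proof -
        have "norm (xs i) \<le> c * norm (res i)" using g resP by (simp add: xs_def)
        also have "\<dots> \<le> c * (norm y / 2 ^ i)" using resP[of i] c by (intro mult_left_mono) auto
        also have "\<dots> = c * norm y * (1/2) ^ i" by (simp add: power_one_over)
        finally show ?thesis .
      qed
      have resSum: "res n = y - (\<Sum>i<n. A (xs i))" for n
        by (induction n) (simp_all add: res0 resS xs_def)
      have geo: "summable (\<lambda>i. c * norm y * (1/2::real) ^ i)"
        by (intro summable_mult summable_geometric) simp
      have sumn: "summable (\<lambda>i. norm (xs i))"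
        by (rule summable_comparison_test[OF _ geo]) (use xsN in auto)
      have sum: "summable xs" using sumn by (rule summable_norm_cancel)
      define x where "x = suminf xs"
      have lim: "(\<lambda>n. \<Sum>i<n. xs i) \<longlonglongrightarrow> x" unfolding x_def using sum by (rule summable_LIMSEQ)
      have "x \<in> V"
        by (rule closed_sequentially[OF V(1) _ lim]) (simp add: subspace_sum[OF V(2)] xsV)
      moreover have "A x = y"
      proof -
        have l1: "(\<lambda>n. A (\<Sum>i<n. xs i)) \<longlonglongrightarrow> A x" using lim by (rule A.tendsto)
        have "(\<lambda>n. res n) \<longlonglongrightarrow> 0"
        proof (rule Lim_null_comparison)
          show "\<forall>\<^sub>F n in sequentially. norm (res n) \<le> norm y / 2 ^ n" using resP by simp
          show "(\<lambda>n. norm y / 2 ^ n) \<longlonglongrightarrow> 0" by (rule LIMSEQ_divide_realpow_zero) simp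
        qed
        then have "(\<lambda>n. y - res n) \<longlonglongrightarrow> y - 0" by (intro tendsto_intros)
        moreover have "(\<lambda>n. y - res n) = (\<lambda>n. A (\<Sum>i<n. xs i))"
          by (simp add: resSum A.sum)
        ultimately have "(\<lambda>n. A (\<Sum>i<n. xs i)) \<longlonglongrightarrow> y" by simp
        with l1 show ?thesis using LIMSEQ_unique by blast
      qed
      moreover have "norm x \<le> 2 * c * norm y"
      proof -
        have "norm x \<le> (\<Sum>i. norm (xs i))" unfolding x_def using sumn by (rule summable_norm)
        also have "\<dots> \<le> (\<Sum>i. c * norm y * (1/2) ^ i)" using sumn geo xsN by (intro suminf_le) auto
        also have "\<dots> = c * norm y * (\<Sum>i. (1/2::real) ^ i)" by (intro suminf_mult) (simp add: summable_geometric)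
        also have "\<dots> = 2 * c * norm y" by (simp add: suminf_geometric)
        finally show ?thesis .
      qed
      ultimately show ?thesis by blast
    qed
  qed
qed



definition psum :: "'a::real_vector set \<Rightarrow> 'a set \<Rightarrow> 'a set" where
  "psum A B = {x + y | x y. x \<in> A \<and> y \<in> B}"

lemma fin_span_subset:
  fixes W :: "'a::real_vector set"
  assumes "finite B" "W \<subseteq> span B"
  obtains G where "finite G" "G \<subseteq> W" "W \<subseteq> span G"
proof -
  obtain G where G: "G \<subseteq> W" "independent G" "W \<subseteq> span G" by (rule maximal_independent_subset)
  have "finite G" using independent_span_bound[OF assms(1) G(2)] G(1) assms(2) by blast
  with G that show ?thesis by blast
qed

lemma fin_dimE:
  fixes W :: "'a::real_vector set"
  assumes "fin_dim W"
  obtains G where "finite G" "G \<subseteq> W" "W \<subseteq> span G"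
  using assms fin_span_subset unfolding fin_dim_def by metis

lemma fin_dim_subset: "fin_dim B \<Longrightarrow> A \<subseteq> B \<Longrightarrow> fin_dim A"
  unfolding fin_dim_def by blast

lemma closed_plus_line:
  fixes M :: "'a::real_normed_vector set"
  assumes M: "closed M" "subspace M"
  shows "closed (psum M (span {v}))"
proof (cases "v \<in> M")
  case True
  have "psum M (span {v}) = M"
  proof
    show "psum M (span {v}) \<subseteq> M" unfolding psum_def
      using True M(2) by (auto simp: span_singleton intro: subspace_add subspace_scale)
    show "M \<subseteq> psum M (span {v})"
    proof
      fix x assume "x \<in> M"
      then show "x \<in> psum M (span {v})" unfolding psum_def
        by (intro CollectI exI[of _ x] exI[of _ 0]) (simp add: span_zero)
    qed
  qed
  with M show ?thesis by simp
next
  case False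
  have "0 \<in> M" using M(2) by (simp add: subspace_0)
  define d where "d = infdist v M"
  have d: "d > 0" unfolding d_def using infdist_pos_not_in_closed[OF M(1) _ False] \<open>0 \<in> M\<close> by auto
  have key: "\<bar>t\<bar> * d \<le> norm (m + t *\<^sub>R v)" if "m \<in> M" for m t
  proof (cases "t = 0")
    case True then show ?thesis by simp
  next
    case False
    have "- ((1/t) *\<^sub>R m) \<in> M" using that M(2) by (simp add: subspace_neg subspace_scale)
    then have "d \<le> dist v (- ((1/t) *\<^sub>R m))" unfolding d_def by (rule infdist_le)
    also have "\<dots> = norm ((1/t) *\<^sub>R (m + t *\<^sub>R v))" using False
      by (simp add: dist_norm algebra_simps)
    also have "\<dots> = norm (m + t *\<^sub>R v) / \<bar>t\<bar>" by simp
    finally show ?thesis using False by (simp add: field_simps)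
  qed
  show ?thesis
    unfolding closed_sequential_limits
  proof (intro allI impI, elim conjE)
    fix y l assume y: "\<forall>n. y n \<in> psum M (span {v})" and l: "y \<longlonglongrightarrow> l"
    have "\<forall>n. \<exists>m t. m \<in> M \<and> y n = m + t *\<^sub>R v" using y unfolding psum_def span_singleton by blast
    then obtain m t where mt: "\<And>n. m n \<in> M" "\<And>n. y n = m n + t n *\<^sub>R v" by metis
    have "Cauchy y" using l by (rule LIMSEQ_imp_Cauchy)
    have "Cauchy t"
    proof (rule CauchyI)
      fix e :: real assume e: "e > 0"
      obtain N where N: "\<forall>i\<ge>N. \<forall>j\<ge>N. norm (y i - y j) < e * d"
        using CauchyD[OF \<open>Cauchy y\<close>, of "e * d"] e d by auto
      show "\<exists>N. \<forall>i\<ge>N. \<forall>j\<ge>N. norm (t i - t j) < e"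
      proof (intro exI allI impI)
        fix i j assume "i \<ge> N" "j \<ge> N"
        have "m i - m j \<in> M" using mt M(2) by (simp add: subspace_diff)
        then have h1: "\<bar>t i - t j\<bar> * d \<le> norm ((m i - m j) + (t i - t j) *\<^sub>R v)" by (rule key)
        have h2: "(m i - m j) + (t i - t j) *\<^sub>R v = y i - y j" by (simp add: mt algebra_simps)
        have h3: "norm (y i - y j) < e * d" using N \<open>i \<ge> N\<close> \<open>j \<ge> N\<close> by blast
        have "\<bar>t i - t j\<bar> * d < e * d" using h1 h2 h3 by simp
        then show "norm (t i - t j) < e" using d by simp
      qed
    qed
    then obtain t0 where t0: "t \<longlonglongrightarrow> t0" using Cauchy_convergent_iff convergent_def by blast
    have "(\<lambda>n. y n - t n *\<^sub>R v) \<longlonglongrightarrow> l - t0 *\<^sub>R v" by (intro tendsto_intros l t0)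
    moreover have "(\<lambda>n. y n - t n *\<^sub>R v) = m" by (simp add: mt fun_eq_iff)
    ultimately have "m \<longlonglongrightarrow> l - t0 *\<^sub>R v" by simp
    then have "l - t0 *\<^sub>R v \<in> M" using closed_sequentially[OF M(1)] mt(1) by blast
    then show "l \<in> psum M (span {v})" unfolding psum_def span_singleton
      by (intro CollectI exI[of _ "l - t0 *\<^sub>R v"] exI[of _ "t0 *\<^sub>R v"]) auto
  qed
qed

lemma subspace_psum: "subspace A \<Longrightarrow> subspace B \<Longrightarrow> subspace (psum A B)"
  unfolding psum_def by (rule subspace_sums)

lemma closed_plus_span:
  fixes M :: "'a::real_normed_vector set"
  assumes "finite B" "closed M" "subspace M"
  shows "closed (psum M (span B))"
  using assms(1)
proof (induction B rule: finite_induct)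
  case empty
  have "psum M (span {}) = M" unfolding psum_def by auto
  then show ?case using assms by simp
next
  case (insert b B)
  have "psum M (span (insert b B)) = psum (psum M (span B)) (span {b})"
  proof -
    have sp: "span (insert b B) = {x + y | x y. x \<in> span {b} \<and> y \<in> span B}"
      using span_Un[of "{b}" B] by simp
    show ?thesis unfolding psum_def sp
      by (auto simp: algebra_simps) (metis add.assoc add.commute)+
  qed
  moreover have "closed (psum (psum M (span B)) (span {b}))"
    by (rule closed_plus_line[OF insert.IH subspace_psum[OF assms(3) subspace_span]])
  ultimately show ?case by simp
qed

lemma closed_span_finite:
  fixes B :: "'a::real_normed_vector set"
  assumes "finite B" shows "closed (span B)"
proof -
  have "psum {0} (span B) = span B" unfolding psum_def by auto
  then show ?thesis using closed_plus_span[OF assms, of "{0}"] by (simp add: subspace_0 subspace_def)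
qed

lemma closed_fin_dim:
  fixes E :: "'a::real_normed_vector set"
  assumes "fin_dim E" "subspace E" shows "closed E"
proof -
  obtain G where G: "finite G" "G \<subseteq> E" "E \<subseteq> span G" using assms(1) by (rule fin_dimE)
  have "span G = E" using G assms(2) by (simp add: span_subspace)
  then show ?thesis using closed_span_finite[OF G(1)] by simp
qed



lemma fin_dim_preimage:
  fixes L :: "'a::real_vector \<Rightarrow> 'b::real_vector"
  assumes L: "linear L" and M: "subspace M" and K: "fin_dim {x\<in>M. L x = 0}" and E: "fin_dim E"
  shows "fin_dim {x\<in>M. L x \<in> E}"
proof -
  obtain B where B: "finite B" "E \<subseteq> span B" using E unfolding fin_dim_def by blast
  obtain Kb where Kb: "finite Kb" "{x\<in>M. L x = 0} \<subseteq> span Kb" using K unfolding fin_dim_def by blast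
  have sub: "L ` {x\<in>M. L x \<in> E} \<subseteq> span B" using B by blast
  obtain G where G: "finite G" "G \<subseteq> L ` {x\<in>M. L x \<in> E}" "L ` {x\<in>M. L x \<in> E} \<subseteq> span G"
    by (rule fin_span_subset[OF B(1) sub])
  obtain H where H: "H \<subseteq> {x\<in>M. L x \<in> E}" "finite H" "G = L ` H"
    using finite_subset_image[OF G(1) G(2)] by blast
  have "H \<subseteq> M" using H(1) by blast
  then have HM: "span H \<subseteq> M" by (rule span_minimal[OF _ M])
  have "{x\<in>M. L x \<in> E} \<subseteq> span (Kb \<union> H)"
  proof
    fix x assume x: "x \<in> {x\<in>M. L x \<in> E}"
    then have "L x \<in> span (L ` H)" using G H by blast
    then obtain h where h: "h \<in> span H" "L x = L h" using span_linear_image[OF L] by auto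
    have "x - h \<in> M" using x h HM M by (auto intro: subspace_diff)
    moreover have "L (x - h) = 0" using h L by (simp add: linear_diff)
    ultimately have "x - h \<in> span Kb" using Kb by blast
    then have "x - h \<in> span (Kb \<union> H)" using span_mono[of Kb "Kb \<union> H"] by blast
    moreover have "h \<in> span (Kb \<union> H)" using h(1) span_mono[of H "Kb \<union> H"] by blast
    ultimately have "(x - h) + h \<in> span (Kb \<union> H)" by (rule span_add)
    then show "x \<in> span (Kb \<union> H)" by simp
  qed
  moreover have "finite (Kb \<union> H)" using Kb H by simp
  ultimately show ?thesis unfolding fin_dim_def by blast
qed

lemma subspace_approx:
  fixes A :: "'a::real_vector set"
  assumes A: "subspace A"
  shows "subspace {e. \<exists>v\<in>span H. v - e \<in> A}"
  unfolding subspace_def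
proof (intro conjI ballI allI)
  show "0 \<in> {e. \<exists>v\<in>span H. v - e \<in> A}" using A by (auto simp: subspace_0 span_zero intro!: bexI[of _ 0])
next
  fix x y assume "x \<in> {e. \<exists>v\<in>span H. v - e \<in> A}" "y \<in> {e. \<exists>v\<in>span H. v - e \<in> A}"
  then obtain v w where vw: "v \<in> span H" "v - x \<in> A" "w \<in> span H" "w - y \<in> A" by blast
  have 1: "(v - x) + (w - y) \<in> A" using vw A by (simp add: subspace_add)
  have 2: "(v - x) + (w - y) = (v + w) - (x + y)" by simp
  have 3: "(v + w) - (x + y) \<in> A" using 1 unfolding 2 .
  have "v + w \<in> span H" using vw by (simp add: span_add)
  with 3 show "x + y \<in> {e. \<exists>v\<in>span H. v - e \<in> A}" by blast
next
  fix c x assume "x \<in> {e. \<exists>v\<in>span H. v - e \<in> A}"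
  then obtain v where v: "v \<in> span H" "v - x \<in> A" by blast
  have 1: "c *\<^sub>R (v - x) \<in> A" using v A by (simp add: subspace_scale)
  have 2: "c *\<^sub>R (v - x) = c *\<^sub>R v - c *\<^sub>R x" by (simp add: scaleR_diff_right)
  have 3: "c *\<^sub>R v - c *\<^sub>R x \<in> A" using 1 unfolding 2 .
  have "c *\<^sub>R v \<in> span H" using v by (simp add: span_scale)
  with 3 show "c *\<^sub>R x \<in> {e. \<exists>v\<in>span H. v - e \<in> A}" by blast
qed

lemma fin_dim_Int_psum:
  fixes N :: "'a::real_vector set"
  assumes N: "subspace N" and A: "subspace A" and K: "fin_dim (N \<inter> A)" and B: "finite B"
  shows "fin_dim (N \<inter> psum A (span B))"
proof -
  define W where "W = {e \<in> span B. \<exists>a\<in>A. a + e \<in> N}"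
  have sub: "W \<subseteq> span B" by (auto simp: W_def)
  obtain G where G: "finite G" "G \<subseteq> W" "W \<subseteq> span G"
    by (rule fin_span_subset[OF B sub])
  have "\<forall>g\<in>G. \<exists>a. a \<in> A \<and> a + g \<in> N" using G(2) by (auto simp: W_def)
  then obtain f where f: "\<And>g. g \<in> G \<Longrightarrow> f g \<in> A \<and> f g + g \<in> N" by (metis (no_types))
  define H where "H = (\<lambda>g. f g + g) ` G"
  have H: "finite H" "H \<subseteq> N" using G f by (auto simp: H_def)
  have HN: "span H \<subseteq> N" by (rule span_minimal[OF H(2) N])
  obtain Kb where Kb: "finite Kb" "N \<inter> A \<subseteq> span Kb" using K unfolding fin_dim_def by blast
  have approx: "\<exists>v\<in>span H. v - e \<in> A" if "e \<in> span G" for e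
    using that
  proof (induction rule: span_induct)
    case base
    show ?case by (rule subspace_approx[OF A])
  next
    case (step g)
    then show ?case using f[of g] by (intro bexI[of _ "f g + g"]) (auto simp: H_def span_base)
  qed
  have "N \<inter> psum A (span B) \<subseteq> span (Kb \<union> H)"
  proof
    fix x assume x: "x \<in> N \<inter> psum A (span B)"
    then obtain a e where ae: "a \<in> A" "e \<in> span B" "x = a + e" "x \<in> N" unfolding psum_def by blast
    then have "e \<in> W" unfolding W_def by blast
    then have "e \<in> span G" using G by blast
    then obtain v where v: "v \<in> span H" "v - e \<in> A" using approx by blast
    have eq: "x - v = a - (v - e)" using ae by (simp add: algebra_simps)
    have "x - v \<in> A" by (subst eq) (rule subspace_diff[OF A ae(1) v(2)])
    moreover have "x - v \<in> N" using ae v HN N by (auto intro: subspace_diff)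
    ultimately have "x - v \<in> span Kb" using Kb by blast
    then have "x - v \<in> span (Kb \<union> H)" using span_mono[of Kb "Kb \<union> H"] by blast
    moreover have "v \<in> span (Kb \<union> H)" using v(1) span_mono[of H "Kb \<union> H"] by blast
    ultimately have "(x - v) + v \<in> span (Kb \<union> H)" by (rule span_add)
    then show "x \<in> span (Kb \<union> H)" by simp
  qed
  moreover have "finite (Kb \<union> H)" using Kb H by simp
  ultimately show ?thesis unfolding fin_dim_def by blast
qed



lemma closed_image_sat:
  fixes A :: "'a::banach \<Rightarrow> 'b::banach"
  assumes A: "bounded_linear A" and V: "closed V" "subspace V" and AV: "closed (A ` V)"
    and C: "closed C" "subspace C" "C \<subseteq> V" "{x\<in>V. A x = 0} \<subseteq> C"
  shows "closed (A ` C)"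
proof -
  interpret A: bounded_linear A by fact
  obtain K where K: "K > 0" "\<And>y. y \<in> A ` V \<Longrightarrow> \<exists>x\<in>V. A x = y \<and> norm x \<le> K * norm y"
    using open_mapping[OF A V AV] by blast
  show ?thesis unfolding closed_sequential_limits
  proof (intro allI impI, elim conjE)
    fix y l assume y: "\<forall>n. y n \<in> A ` C" and l: "y \<longlonglongrightarrow> l"
    have "\<forall>n. \<exists>c. c \<in> C \<and> y n = A c" using y by blast
    then obtain c where c: "\<And>n. c n \<in> C" "\<And>n. y n = A (c n)" by metis
    have "\<forall>n. y n \<in> A ` V" using y C(3) by blast
    then have "l \<in> A ` V" using closed_sequentially[OF AV _ l] by blast
    then obtain x where x: "x \<in> V" "l = A x" by blast
    have "\<forall>n. \<exists>x'. x' \<in> V \<and> A x' = y n - l \<and> norm x' \<le> K * norm (y n - l)"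
    proof
      fix n
      have "c n - x \<in> V" using c(1) C(3) x(1) V(2) by (auto intro: subspace_diff)
      moreover have "y n - l = A (c n - x)" using c x by (simp add: A.diff)
      ultimately have "y n - l \<in> A ` V" by blast
      then show "\<exists>x'. x' \<in> V \<and> A x' = y n - l \<and> norm x' \<le> K * norm (y n - l)" using K(2) by blast
    qed
    then obtain x' where x': "\<And>n. x' n \<in> V" "\<And>n. A (x' n) = y n - l" "\<And>n. norm (x' n) \<le> K * norm (y n - l)"
      by metis
    have "x' \<longlonglongrightarrow> 0"
    proof (rule Lim_null_comparison)
      show "\<forall>\<^sub>F n in sequentially. norm (x' n) \<le> K * norm (y n - l)" using x' by simp
      have "(\<lambda>n. y n - l) \<longlonglongrightarrow> l - l" by (intro tendsto_intros l)
      then have "(\<lambda>n. norm (y n - l)) \<longlonglongrightarrow> 0" using tendsto_norm_zero by force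
      then show "(\<lambda>n. K * norm (y n - l)) \<longlonglongrightarrow> 0" using tendsto_mult_right_zero by blast
    qed
    have inC: "x + x' n \<in> C" for n
    proof -
      have "x + x' n \<in> V" using x(1) x'(1) V(2) by (simp add: subspace_add)
      moreover have "c n \<in> V" using c(1) C(3) by blast
      ultimately have "c n - (x + x' n) \<in> V" using V(2) by (simp add: subspace_diff)
      moreover have "A (c n - (x + x' n)) = 0" using c x x' by (simp add: A.diff A.add)
      ultimately have "c n - (x + x' n) \<in> C" using C(4) by blast
      then have "c n - (c n - (x + x' n)) \<in> C" by (rule subspace_diff[OF C(2) c(1)])
      then show ?thesis by (simp add: add.commute)
    qed
    have "(\<lambda>n. x + x' n) \<longlonglongrightarrow> x + 0" by (intro tendsto_intros \<open>x' \<longlonglongrightarrow> 0\<close>)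
    then have "x \<in> C" using closed_sequentially[OF C(1)] inC by fastforce
    then show "l \<in> A ` C" using x by blast
  qed
qed

lemma closed_transfer:
  fixes B :: "'a::banach \<Rightarrow> 'b::banach" and Q :: "'b \<Rightarrow> 'c::banach"
  assumes Z: "closed Z" "subspace Z" and B: "bounded_linear B" and Q: "bounded_linear Q"
    and P: "closed ((\<lambda>x. Q (B x)) ` Z)" and K: "closed (B ` {x\<in>Z. Q (B x) = 0})"
  shows "closed (B ` Z)"
proof -
  interpret B: bounded_linear B by fact
  interpret Q: bounded_linear Q by fact
  have PL: "bounded_linear (\<lambda>x. Q (B x))" using bounded_linear_compose[OF Q B] .
  obtain Kc where Kc: "Kc > 0" "\<And>y. y \<in> (\<lambda>x. Q (B x)) ` Z \<Longrightarrow> \<exists>x\<in>Z. Q (B x) = y \<and> norm x \<le> Kc * norm y"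
    using open_mapping[OF PL Z P] by blast
  show ?thesis unfolding closed_sequential_limits
  proof (intro allI impI, elim conjE)
    fix y l assume y: "\<forall>n. y n \<in> B ` Z" and l: "y \<longlonglongrightarrow> l"
    have "\<forall>n. \<exists>c. c \<in> Z \<and> y n = B c" using y by blast
    then obtain x where x: "\<And>n. x n \<in> Z" "\<And>n. y n = B (x n)" by metis
    have Ql: "(\<lambda>n. Q (y n)) \<longlonglongrightarrow> Q l" using l by (rule Q.tendsto)
    have "\<forall>n. Q (y n) \<in> (\<lambda>x. Q (B x)) ` Z"
    proof
      fix n show "Q (y n) \<in> (\<lambda>x. Q (B x)) ` Z" using x(1)[of n] by (simp add: x(2))
    qed
    then have "Q l \<in> (\<lambda>x. Q (B x)) ` Z" using closed_sequentially[OF P _ Ql] by blast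
    then obtain x0 where x0: "x0 \<in> Z" "Q l = Q (B x0)" by blast
    have "\<forall>n. \<exists>x'. x' \<in> Z \<and> Q (B x') = Q (B (x n - x0)) \<and> norm x' \<le> Kc * norm (Q (y n) - Q l)"
    proof
      fix n
      have xz: "x n - x0 \<in> Z" using x x0 Z(2) by (auto intro: subspace_diff)
      have eq: "Q (B (x n - x0)) = Q (y n) - Q l" using x x0 by (simp add: B.diff Q.diff)
      have mem: "Q (B (x n - x0)) \<in> (\<lambda>x. Q (B x)) ` Z" using xz by (rule imageI)
      obtain w where "w \<in> Z" "Q (B w) = Q (B (x n - x0))" "norm w \<le> Kc * norm (Q (B (x n - x0)))"
        using Kc(2)[OF mem] by blast
      then show "\<exists>x'. x' \<in> Z \<and> Q (B x') = Q (B (x n - x0)) \<and> norm x' \<le> Kc * norm (Q (y n) - Q l)"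
        unfolding eq by blast
    qed
    then obtain x' where x': "\<And>n. x' n \<in> Z" "\<And>n. Q (B (x' n)) = Q (B (x n - x0))"
      "\<And>n. norm (x' n) \<le> Kc * norm (Q (y n) - Q l)" by metis
    have "x' \<longlonglongrightarrow> 0"
    proof (rule Lim_null_comparison)
      show "\<forall>\<^sub>F n in sequentially. norm (x' n) \<le> Kc * norm (Q (y n) - Q l)" using x' by simp
      have "(\<lambda>n. Q (y n) - Q l) \<longlonglongrightarrow> Q l - Q l" by (intro tendsto_intros Ql)
      then have "(\<lambda>n. norm (Q (y n) - Q l)) \<longlonglongrightarrow> 0" using tendsto_norm_zero by force
      then show "(\<lambda>n. Kc * norm (Q (y n) - Q l)) \<longlonglongrightarrow> 0" using tendsto_mult_right_zero by blast
    qed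
    define u where "u n = x n - x0 - x' n" for n
    have uK: "u n \<in> {x\<in>Z. Q (B x) = 0}" for n
    proof -
      have "u n \<in> Z" using x x0 x' Z(2) by (auto simp: u_def intro: subspace_diff)
      moreover have "Q (B (u n)) = 0" using x'(2)[of n] by (simp add: u_def B.diff Q.diff)
      ultimately show ?thesis by simp
    qed
    have Bx': "(\<lambda>n. B (x' n)) \<longlonglongrightarrow> B 0" using \<open>x' \<longlonglongrightarrow> 0\<close> by (rule B.tendsto)
    have "(\<lambda>n. y n - B x0 - B (x' n)) \<longlonglongrightarrow> l - B x0 - B 0" by (intro tendsto_intros l Bx')
    moreover have "(\<lambda>n. y n - B x0 - B (x' n)) = (\<lambda>n. B (u n))" by (simp add: fun_eq_iff u_def x B.diff)
    ultimately have lim: "(\<lambda>n. B (u n)) \<longlonglongrightarrow> l - B x0" by simp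
    have mem: "\<And>n. B (u n) \<in> B ` {x\<in>Z. Q (B x) = 0}" using uK by (rule imageI)
    have "l - B x0 \<in> B ` {x\<in>Z. Q (B x) = 0}" by (rule closed_sequentially[OF K mem lim])
    then obtain w where w: "w \<in> Z" "l - B x0 = B w" by blast
    then have "l = B (x0 + w)" by (simp add: B.add algebra_simps)
    moreover have "x0 + w \<in> Z" using x0 w Z(2) by (simp add: subspace_add)
    ultimately show "l \<in> B ` Z" by blast
  qed
qed

lemma closed_psum_fincodim:
  fixes Z W :: "'a::real_normed_vector set"
  assumes Z: "closed Z" "subspace Z" and E0: "finite E0" "psum Z (span E0) = UNIV" and W: "subspace W"
  shows "closed (psum Z W)"
proof -
  define U where "U = {e \<in> span E0. e \<in> psum Z W}"
  obtain G where G: "finite G" "G \<subseteq> U" "U \<subseteq> span G"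
    using fin_span_subset[OF E0(1), of U] by (auto simp: U_def)
  have ZW: "subspace (psum Z W)" using Z(2) W by (rule subspace_psum)
  have "psum Z W = psum Z (span G)"
  proof
    show "psum Z W \<subseteq> psum Z (span G)"
    proof
      fix x assume "x \<in> psum Z W"
      then obtain z w where zw: "z \<in> Z" "w \<in> W" "x = z + w" unfolding psum_def by blast
      have "w \<in> psum Z (span E0)" using E0(2) by simp
      then obtain z' e where ze: "z' \<in> Z" "e \<in> span E0" "w = z' + e" unfolding psum_def by blast
      have "- z' \<in> Z" using ze Z(2) by (simp add: subspace_neg)
      then have "(- z') + w \<in> psum Z W" using zw unfolding psum_def by blast
      moreover have "(- z') + w = e" using ze by simp
      ultimately have "e \<in> U" using ze unfolding U_def by simp
      then have "e \<in> span G" using G by blast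
      moreover have "z + z' \<in> Z" using zw ze Z(2) by (simp add: subspace_add)
      moreover have "x = (z + z') + e" using zw ze by simp
      ultimately show "x \<in> psum Z (span G)" unfolding psum_def by blast
    qed
    show "psum Z (span G) \<subseteq> psum Z W"
    proof
      fix x assume "x \<in> psum Z (span G)"
      then obtain z g where zg: "z \<in> Z" "g \<in> span G" "x = z + g" unfolding psum_def by blast
      have "span G \<subseteq> psum Z W" using G(2) ZW unfolding U_def by (intro span_minimal) auto
      then obtain z' w where zw: "z' \<in> Z" "w \<in> W" "g = z' + w" using zg unfolding psum_def by blast
      have "z + z' \<in> Z" using zg zw Z(2) by (simp add: subspace_add)
      moreover have "x = (z + z') + w" using zg zw by simp
      ultimately show "x \<in> psum Z W" using zw unfolding psum_def by blast
    qed
  qed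
  then show ?thesis using closed_plus_span[OF G(1) Z] by simp
qed



lemma bl_funpow:
  fixes f :: "'a::real_normed_vector \<Rightarrow> 'a"
  shows "bounded_linear f \<Longrightarrow> bounded_linear (f ^^ n)"
proof (induction n)
  case 0
  show ?case by (simp add: id_def bounded_linear_ident)
next
  case (Suc n)
  then have "bounded_linear (\<lambda>x. f ((f ^^ n) x))" by (auto intro: bounded_linear_compose[of f "f ^^ n"])
  then show ?case by (simp add: comp_def)
qed

lemma comm_funpow1:
  assumes "\<And>x. f (g x) = g (f x)"
  shows "f ((g ^^ j) x) = (g ^^ j) (f x)"
proof (induction j)
  case 0 show ?case by simp
next
  case (Suc j)
  have "f ((g ^^ Suc j) x) = f (g ((g ^^ j) x))" by simp
  also have "\<dots> = g (f ((g ^^ j) x))" by (rule assms)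
  also have "\<dots> = g ((g ^^ j) (f x))" using Suc by simp
  finally show ?case by simp
qed

lemma comm_funpow2:
  assumes "\<And>x. f (g x) = g (f x)"
  shows "(f ^^ i) ((g ^^ j) x) = (g ^^ j) ((f ^^ i) x)"
proof (induction i arbitrary: x)
  case 0 then show ?case by simp
next
  case (Suc i)
  have "(f ^^ Suc i) ((g ^^ j) x) = f ((f ^^ i) ((g ^^ j) x))" by simp
  also have "\<dots> = f ((g ^^ j) ((f ^^ i) x))" using Suc by simp
  also have "\<dots> = (g ^^ j) (f ((f ^^ i) x))" by (rule comm_funpow1[of f g, OF assms])
  finally show ?case by simp
qed

lemma funpow_inv:
  assumes "\<And>x. x \<in> Z \<Longrightarrow> f x \<in> Z" "x \<in> Z"
  shows "(f ^^ n) x \<in> Z"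
  using assms(2) by (induction n) (simp_all add: assms(1))

lemma factor_lemma:
  fixes U W G :: "'a::real_normed_vector \<Rightarrow> 'a"
  assumes U: "\<And>x. U x = W x + G x"
    and bW: "bounded_linear W" and bG: "bounded_linear G"
    and cWG: "\<And>x. W (G x) = G (W x)"
    and Z: "subspace Z" "\<And>x. x \<in> Z \<Longrightarrow> W x \<in> Z" "\<And>x. x \<in> Z \<Longrightarrow> G x \<in> Z"
    and nil: "\<And>x. x \<in> Z \<Longrightarrow> (G ^^ p) x = 0"
  shows "\<exists>\<psi>. bounded_linear \<psi> \<and> (\<forall>x. \<psi> (W x) = W (\<psi> x)) \<and> (\<forall>x\<in>Z. \<psi> x \<in> Z) \<and>
     (\<forall>x\<in>Z. (G ^^ j) ((U ^^ i) x) = (W ^^ (i + j - p)) (\<psi> x))"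
proof (induction i arbitrary: j)
  case 0
  show ?case
  proof (cases "p \<le> j")
    case True
    have "(G ^^ j) x = 0" if "x \<in> Z" for x
    proof -
      obtain d where d: "j = d + p" using True le_Suc_ex by (metis add.commute)
      have "(G ^^ j) x = (G ^^ (j - p)) ((G ^^ p) x)" unfolding d by (simp add: funpow_add)
      also have "\<dots> = 0" using nil[OF that] linear_0[OF bounded_linear.linear[OF bl_funpow[OF bG]]] by simp
      finally show ?thesis .
    qed
    then show ?thesis
      using linear_0[OF bounded_linear.linear[OF bW]] linear_0[OF bounded_linear.linear[OF bl_funpow[OF bW]]]
      by (intro exI[of _ "\<lambda>x. 0"]) (auto simp: bounded_linear_zero Z(1) subspace_0 funpow_0)
  next
    case False
    have "bounded_linear (G ^^ j)" by (rule bl_funpow[OF bG])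
    moreover have "\<forall>x. (G ^^ j) (W x) = W ((G ^^ j) x)" using comm_funpow1[of W G, OF cWG] by simp
    moreover have "\<forall>x\<in>Z. (G ^^ j) x \<in> Z" using funpow_inv[of Z G] Z(3) by blast
    ultimately show ?thesis using False by (intro exI[of _ "G ^^ j"]) simp
  qed
next
  case (Suc i)
  obtain \<psi> where \<psi>: "bounded_linear \<psi>" "\<forall>x. \<psi> (W x) = W (\<psi> x)" "\<forall>x\<in>Z. \<psi> x \<in> Z"
    "\<forall>x\<in>Z. (G ^^ j) ((U ^^ i) x) = (W ^^ (i + j - p)) (\<psi> x)" using Suc[of j] by blast
  obtain \<phi> where \<phi>: "bounded_linear \<phi>" "\<forall>x. \<phi> (W x) = W (\<phi> x)" "\<forall>x\<in>Z. \<phi> x \<in> Z"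
    "\<forall>x\<in>Z. (G ^^ Suc j) ((U ^^ i) x) = (W ^^ (i + Suc j - p)) (\<phi> x)" using Suc[of "Suc j"] by blast
  have bU: "bounded_linear U"
  proof -
    have "bounded_linear (\<lambda>x. W x + G x)" using bW bG by (rule bounded_linear_add)
    moreover have "U = (\<lambda>x. W x + G x)" using U by (simp add: fun_eq_iff)
    ultimately show ?thesis by simp
  qed
  have cUG: "U (G x) = G (U x)" for x
    using U cWG linear_add[OF bounded_linear.linear[OF bG]] by simp
  have blUi: "bounded_linear (U ^^ i)" by (rule bl_funpow[OF bU])
  have blGj: "bounded_linear (G ^^ j)" by (rule bl_funpow[OF bG])
  have blWn: "bounded_linear (W ^^ n)" for n by (rule bl_funpow[OF bW])
  have key: "(G ^^ j) ((U ^^ Suc i) x) = (W ^^ (i + j - p)) (\<psi> (W x)) + (W ^^ (i + Suc j - p)) (\<phi> x)"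
    if x: "x \<in> Z" for x
  proof -
    have "(U ^^ Suc i) x = (U ^^ i) (U x)" by (simp add: funpow_Suc_right del: funpow.simps)
    also have "\<dots> = (U ^^ i) (W x) + (U ^^ i) (G x)" using U linear_add[OF bounded_linear.linear[OF blUi]] by simp
    finally have "(G ^^ j) ((U ^^ Suc i) x) = (G ^^ j) ((U ^^ i) (W x)) + (G ^^ j) ((U ^^ i) (G x))"
      using linear_add[OF bounded_linear.linear[OF blGj]] by simp
    also have "(G ^^ j) ((U ^^ i) (G x)) = (G ^^ Suc j) ((U ^^ i) x)"
      using comm_funpow1[of G U, OF cUG[symmetric], of i x] by (simp add: funpow_Suc_right del: funpow.simps)
    also have "(G ^^ j) ((U ^^ i) (W x)) = (W ^^ (i + j - p)) (\<psi> (W x))" using \<psi>(4) Z(2) x by blast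
    also have "(G ^^ Suc j) ((U ^^ i) x) = (W ^^ (i + Suc j - p)) (\<phi> x)" using \<phi>(4) x by blast
    finally show ?thesis .
  qed
  show ?case
  proof (cases "p \<le> i + j")
    case True
    have "bounded_linear (\<lambda>x. \<psi> x + \<phi> x)" using \<psi>(1) \<phi>(1) by (rule bounded_linear_add)
    moreover have "\<forall>x. \<psi> (W x) + \<phi> (W x) = W (\<psi> x + \<phi> x)"
      using \<psi>(2) \<phi>(2) linear_add[OF bounded_linear.linear[OF bW]] by simp
    moreover have "\<forall>x\<in>Z. \<psi> x + \<phi> x \<in> Z" using \<psi>(3) \<phi>(3) Z(1) by (simp add: subspace_add)
    moreover have "\<forall>x\<in>Z. (G ^^ j) ((U ^^ Suc i) x) = (W ^^ (Suc i + j - p)) (\<psi> x + \<phi> x)"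
    proof
      fix x assume x: "x \<in> Z"
      have e1: "(W ^^ (i + j - p)) (\<psi> (W x)) = (W ^^ (Suc i + j - p)) (\<psi> x)"
        using True \<psi>(2) by (simp add: Suc_diff_le funpow_Suc_right del: funpow.simps)
      have e2: "i + Suc j - p = Suc i + j - p" by simp
      show "(G ^^ j) ((U ^^ Suc i) x) = (W ^^ (Suc i + j - p)) (\<psi> x + \<phi> x)"
        using key[OF x] e1 e2 linear_add[OF bounded_linear.linear[OF blWn[of "Suc i + j - p"]]] by simp
    qed
    ultimately show ?thesis by (intro exI[of _ "\<lambda>x. \<psi> x + \<phi> x"]) simp
  next
    case False
    have "bounded_linear (\<lambda>x. W (\<psi> x) + \<phi> x)"
      using bounded_linear_compose[OF bW \<psi>(1)] \<phi>(1) by (rule bounded_linear_add)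
    moreover have "\<forall>x. W (\<psi> (W x)) + \<phi> (W x) = W (W (\<psi> x) + \<phi> x)"
      using \<psi>(2) \<phi>(2) linear_add[OF bounded_linear.linear[OF bW]] by simp
    moreover have "\<forall>x\<in>Z. W (\<psi> x) + \<phi> x \<in> Z" using \<psi>(3) \<phi>(3) Z(1,2) by (simp add: subspace_add)
    moreover have "\<forall>x\<in>Z. (G ^^ j) ((U ^^ Suc i) x) = (W ^^ (Suc i + j - p)) (W (\<psi> x) + \<phi> x)"
    proof
      fix x assume x: "x \<in> Z"
      have z1: "i + j - p = 0" "i + Suc j - p = 0" "Suc i + j - p = 0" using False by simp_all
      show "(G ^^ j) ((U ^^ Suc i) x) = (W ^^ (Suc i + j - p)) (W (\<psi> x) + \<phi> x)"
        using key[OF x] z1 \<psi>(2) by simp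
    qed
    ultimately show ?thesis by (intro exI[of _ "\<lambda>x. W (\<psi> x) + \<phi> x"]) simp
  qed
qed



lemma neg_pow_kill:
  fixes T F :: "'a::real_normed_vector \<Rightarrow> 'a"
  assumes bT: "bounded_linear T" and bF: "bounded_linear F" and c: "\<And>x. F (T x) = T (F x)" and y: "T y + F y = 0"
  shows "(T ^^ k) y = (-1) ^ k *\<^sub>R (F ^^ k) y"
proof (induction k)
  case 0 then show ?case by simp
next
  case (Suc k)
  have lTk: "linear (T ^^ k)" using bl_funpow[OF bT] by (rule bounded_linear.linear)
  have lF: "linear F" using bF by (rule bounded_linear.linear)
  have "(T ^^ Suc k) y = (T ^^ k) (T y)" by (simp add: funpow_Suc_right del: funpow.simps)
  also have "T y = - F y" using y by (simp add: eq_neg_iff_add_eq_0)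
  also have "(T ^^ k) (- F y) = - (T ^^ k) (F y)" using lTk by (simp add: linear_neg)
  also have "(T ^^ k) (F y) = F ((T ^^ k) y)" using comm_funpow1[of F T, OF c] by simp
  also have "F ((T ^^ k) y) = (-1) ^ k *\<^sub>R F ((F ^^ k) y)" using Suc lF by (simp add: linear_scale)
  finally show ?case by simp
qed

lemma neg_funpow:
  fixes F :: "'a::real_normed_vector \<Rightarrow> 'a"
  assumes lF: "linear F"
  shows "((\<lambda>x. - F x) ^^ k) y = (-1) ^ k *\<^sub>R (F ^^ k) y"
proof (induction k)
  case 0 then show ?case by simp
next
  case (Suc k)
  have "((\<lambda>x. - F x) ^^ Suc k) y = - F (((\<lambda>x. - F x) ^^ k) y)" by simp
  also have "\<dots> = - ((-1) ^ k *\<^sub>R F ((F ^^ k) y))" using Suc lF by (simp add: linear_scale)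
  finally show ?case by simp
qed

theorem lemma2p7:
  fixes J T F :: "'a::banach \<Rightarrow> 'a"
  assumes "complex_structure J"
    and "\<not> fin_dim (UNIV :: 'a set)"
    and "bounded_op J F"
    and "\<exists>n. fin_dim (range (F ^^ n))"
    and "bounded_op J T"
    and "upper_semi_B_fredholm T"
    and "T \<circ> F = F \<circ> T"
  shows "upper_semi_B_fredholm (\<lambda>x. T x + F x)"
proof -
  have bF: "bounded_linear F" using assms(3) by (simp add: bounded_op_def)
  have bT: "bounded_linear T" using assms(5) by (simp add: bounded_op_def)
  have lF: "linear F" using bF by (rule bounded_linear.linear)
  have lT: "linear T" using bT by (rule bounded_linear.linear)
  have cTF: "\<And>x. T (F x) = F (T x)" using assms(7) by (metis comp_apply)
  obtain m where fm: "fin_dim (range (F ^^ m))" using assms(4) by blast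
  obtain n0 where n0: "closed (range (T ^^ n0))"
      "closedin (top_of_set (range (T ^^ n0))) (T ` range (T ^^ n0))"
      "fin_dim {x \<in> range (T ^^ n0). T x = 0}"
    using assms(6) unfolding upper_semi_B_fredholm_def upper_semi_fredholm_on_def by blast
  define M where "M = range (T ^^ n0)"
  define S where "S = (\<lambda>x. T x + F x)"
  have bS: "bounded_linear S" unfolding S_def using bT bF by (rule bounded_linear_add)
  have lS: "linear S" using bS by (rule bounded_linear.linear)
  have blT: "\<And>k. bounded_linear (T ^^ k)" using bl_funpow[OF bT] .
  have blS: "\<And>k. bounded_linear (S ^^ k)" using bl_funpow[OF bS] .
  have blF: "\<And>k. bounded_linear (F ^^ k)" using bl_funpow[OF bF] .
  have lTk: "\<And>k. linear (T ^^ k)" using blT by (rule bounded_linear.linear)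
  have lSk: "\<And>k. linear (S ^^ k)" using blS by (rule bounded_linear.linear)
  have lFk: "\<And>k. linear (F ^^ k)" using blF by (rule bounded_linear.linear)
  have cST: "\<And>x. T (S x) = S (T x)" unfolding S_def using cTF linear_add[OF lT] by simp
  have cSF: "\<And>x. F (S x) = S (F x)" unfolding S_def using cTF linear_add[OF lF] by simp
  have subM: "subspace M" unfolding M_def by (rule linear_subspace_image[OF lTk subspace_UNIV])
  have clM: "closed M" using n0(1) by (simp add: M_def)
  have TM: "\<And>x. x \<in> M \<Longrightarrow> T x \<in> M"
  proof -
    fix x assume "x \<in> M"
    then obtain y where "x = (T ^^ n0) y" by (auto simp: M_def)
    then have "T x = (T ^^ n0) (T y)" by (simp add: funpow_swap1)
    then show "T x \<in> M" by (simp add: M_def)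
  qed
  have clTM: "closed (T ` M)" using closedin_closed_trans[OF n0(2)[folded M_def] clM] .
  have kerM: "fin_dim {x \<in> M. T x = 0}" using n0(3) by (simp add: M_def)

  have clTiM: "closed ((T ^^ i) ` M)" for i
  proof (induction i)
    case 0 then show ?case using clM by simp
  next
    case (Suc i)
    obtain K0 where K0: "finite K0" "K0 \<subseteq> {x \<in> M. T x = 0}" "{x \<in> M. T x = 0} \<subseteq> span K0"
      using kerM by (rule fin_dimE)
    define C where "C = psum ((T ^^ i) ` M) (span K0)"
    have subTiM: "subspace ((T ^^ i) ` M)" by (rule linear_subspace_image[OF lTk subM])
    have TiM: "(T ^^ i) ` M \<subseteq> M" using funpow_inv[of M T] TM by blast
    have spK0: "span K0 \<subseteq> M" using K0(2) by (intro span_minimal[OF _ subM]) auto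
    have spK0T: "\<And>v. v \<in> span K0 \<Longrightarrow> T v = 0"
    proof -
      fix v assume "v \<in> span K0"
      then show "T v = 0"
      proof (induction rule: span_induct)
        case base
        show ?case using linear_subspace_kernel[OF lT] by simp
      next
        case (step x) then show ?case using K0(2) by auto
      qed
    qed
    have clC: "closed C" unfolding C_def by (rule closed_plus_span[OF K0(1) Suc subTiM])
    have subC: "subspace C" unfolding C_def by (rule subspace_psum[OF subTiM subspace_span])
    have CM: "C \<subseteq> M" unfolding C_def psum_def using TiM spK0 subM by (auto intro: subspace_add)
    have kerC: "{x \<in> M. T x = 0} \<subseteq> C"
    proof
      fix x assume "x \<in> {x \<in> M. T x = 0}"
      then have "x \<in> span K0" using K0(3) by blast
      moreover have "0 \<in> (T ^^ i) ` M" using subTiM by (simp add: subspace_0)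
      ultimately have "0 + x \<in> C" unfolding C_def psum_def by blast
      then show "x \<in> C" by simp
    qed
    have "closed (T ` C)" by (rule closed_image_sat[OF bT clM subM clTM clC subC CM kerC])
    moreover have "T ` C = (T ^^ Suc i) ` M"
    proof
      show "T ` C \<subseteq> (T ^^ Suc i) ` M"
      proof
        fix y assume "y \<in> T ` C"
        then obtain a v where av: "a \<in> (T ^^ i) ` M" "v \<in> span K0" "y = T (a + v)"
          unfolding C_def psum_def by blast
        then have "y = T a" using spK0T linear_add[OF lT] by simp
        then show "y \<in> (T ^^ Suc i) ` M" using av(1) by auto
      qed
      show "(T ^^ Suc i) ` M \<subseteq> T ` C"
      proof
        fix y assume "y \<in> (T ^^ Suc i) ` M"
        then obtain x where x: "x \<in> M" "y = T ((T ^^ i) x)" by auto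
        have "(T ^^ i) x + 0 \<in> C" unfolding C_def psum_def using x(1) by (blast intro: span_zero)
        then show "y \<in> T ` C" using x(2) by (metis add_0_right image_eqI)
      qed
    qed
    ultimately show ?case by simp
  qed
  have rngTn: "range (T ^^ (n0 + d)) = (T ^^ d) ` M" for d
  proof -
    have "T ^^ (n0 + d) = T ^^ d \<circ> T ^^ n0" by (simp add: funpow_add[symmetric] add.commute)
    then show ?thesis unfolding M_def by (simp add: image_comp)
  qed
  have clRT: "closed (range (T ^^ (n0 + d)))" for d unfolding rngTn by (rule clTiM)
  have TiM: "(T ^^ d) x \<in> M" if "x \<in> M" for x d using funpow_inv[of M T, OF TM that] .
  have RTsubM: "range (T ^^ (n0 + d)) \<subseteq> M" for d
    unfolding rngTn using TiM by blast

  have kerTb: "fin_dim {x \<in> M. (T ^^ b) x = 0}" for b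
  proof (induction b)
    case 0
    have "{x \<in> M. (T ^^ 0) x = 0} \<subseteq> span {}" by (auto simp: span_empty)
    then show ?case unfolding fin_dim_def by blast
  next
    case (Suc b)
    have "{x \<in> M. (T ^^ Suc b) x = 0} = {x \<in> M. T x \<in> {y \<in> M. (T ^^ b) y = 0}}"
      using TM by (auto simp: funpow_Suc_right simp del: funpow.simps)
    moreover have "fin_dim {x \<in> M. T x \<in> {y \<in> M. (T ^^ b) y = 0}}"
      by (rule fin_dim_preimage[OF lT subM kerM Suc])
    ultimately show ?case by simp
  qed

  define Z where "Z = {x. (F ^^ m) x = 0}"
  have subZ: "subspace Z" unfolding Z_def by (rule linear_subspace_kernel[OF lFk])
  have clZ: "closed Z" unfolding Z_def
    by (rule closed_Collect_eq) (auto intro: linear_continuous_on blF)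
  have ZT: "\<And>x. x \<in> Z \<Longrightarrow> T x \<in> Z"
  proof -
    fix x assume "x \<in> Z"
    then have x: "(F ^^ m) x = 0" by (simp add: Z_def)
    have "(F ^^ m) (T x) = T ((F ^^ m) x)" using comm_funpow1[of T F, OF cTF] by simp
    also have "\<dots> = 0" using x linear_0[OF lT] by simp
    finally show "T x \<in> Z" by (simp add: Z_def)
  qed
  have ZF: "\<And>x. x \<in> Z \<Longrightarrow> F x \<in> Z"
    unfolding Z_def using linear_0[OF lF] by (simp add: funpow_swap1[symmetric])
  have ZS: "\<And>x. x \<in> Z \<Longrightarrow> S x \<in> Z" unfolding S_def using ZT ZF subZ by (simp add: subspace_add)
  have nilZ: "\<And>x. x \<in> Z \<Longrightarrow> (F ^^ m) x = 0" unfolding Z_def by simp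
  obtain G where G: "finite G" "G \<subseteq> range (F ^^ m)" "range (F ^^ m) \<subseteq> span G"
    using fm by (rule fin_dimE)
  obtain E0 where E0: "finite E0" "G = (F ^^ m) ` E0"
    using finite_subset_image[OF G(1) G(2)] by blast
  have ZE0: "psum Z (span E0) = UNIV"
  proof (intro set_eqI iffI)
    fix x :: 'a
    have "(F ^^ m) x \<in> span ((F ^^ m) ` E0)" using G E0 by blast
    then obtain e where e: "e \<in> span E0" "(F ^^ m) x = (F ^^ m) e"
      using span_linear_image[OF lFk] by auto
    have "x - e \<in> Z" unfolding Z_def using e linear_diff[OF lFk] by simp
    then have "(x - e) + e \<in> psum Z (span E0)" unfolding psum_def using e(1) by blast
    then show "x \<in> psum Z (span E0)" by simp
  qed simp

  have clTZ: "closed ((T ^^ (n0 + d)) ` Z)" for d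
  proof -
    define W where "W = {x. (T ^^ (n0 + d)) x = 0}"
    have subW: "subspace W" unfolding W_def by (rule linear_subspace_kernel[OF lTk])
    have clZW: "closed (psum Z W)" by (rule closed_psum_fincodim[OF clZ subZ E0(1) ZE0 subW])
    have subZW: "subspace (psum Z W)" by (rule subspace_psum[OF subZ subW])
    have kerZW: "{x \<in> UNIV. (T ^^ (n0 + d)) x = 0} \<subseteq> psum Z W"
    proof
      fix x assume "x \<in> {x \<in> UNIV. (T ^^ (n0 + d)) x = 0}"
      then have "0 + x \<in> psum Z W" unfolding psum_def W_def using subZ by (blast intro: subspace_0)
      then show "x \<in> psum Z W" by simp
    qed
    have "closed ((T ^^ (n0 + d)) ` psum Z W)"
      by (rule closed_image_sat[OF blT closed_UNIV subspace_UNIV clRT clZW subZW _ kerZW]) simp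
    moreover have "(T ^^ (n0 + d)) ` psum Z W = (T ^^ (n0 + d)) ` Z"
    proof
      show "(T ^^ (n0 + d)) ` psum Z W \<subseteq> (T ^^ (n0 + d)) ` Z"
      proof
        fix y assume "y \<in> (T ^^ (n0 + d)) ` psum Z W"
        then obtain z w where zw: "z \<in> Z" "w \<in> W" "y = (T ^^ (n0 + d)) (z + w)"
          unfolding psum_def by blast
        then have "y = (T ^^ (n0 + d)) z" using linear_add[OF lTk] by (simp add: W_def)
        then show "y \<in> (T ^^ (n0 + d)) ` Z" using zw(1) by blast
      qed
      show "(T ^^ (n0 + d)) ` Z \<subseteq> (T ^^ (n0 + d)) ` psum Z W"
      proof
        fix y assume "y \<in> (T ^^ (n0 + d)) ` Z"
        then obtain z where z: "z \<in> Z" "y = (T ^^ (n0 + d)) z" by blast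
        have "z + 0 \<in> psum Z W" unfolding psum_def using z(1) subW by (blast intro: subspace_0)
        then show "y \<in> (T ^^ (n0 + d)) ` psum Z W" using z(2) by (metis add_0_right image_eqI)
      qed
    qed
    ultimately show ?thesis by simp
  qed

  have RSZ: "(S ^^ (k + m)) ` Z \<subseteq> (T ^^ k) ` Z" for k
  proof -
    obtain \<psi> where \<psi>: "bounded_linear \<psi>" "\<forall>x. \<psi> (T x) = T (\<psi> x)" "\<forall>x\<in>Z. \<psi> x \<in> Z"
      "\<forall>x\<in>Z. (F ^^ 0) ((S ^^ (k + m)) x) = (T ^^ (k + m + 0 - m)) (\<psi> x)"
      using factor_lemma[of S T F Z m 0 "k + m", OF _ bT bF cTF subZ ZT ZF nilZ] by (auto simp: S_def)
    show ?thesis using \<psi>(3,4) by auto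
  qed
  have SZM: "(S ^^ (n0 + d + m)) ` Z \<subseteq> M" for d
    using RSZ[of "n0 + d"] RTsubM[of d] by blast

  have factQ: "\<exists>\<psi>. bounded_linear \<psi> \<and> (\<forall>x\<in>Z. \<psi> ((S ^^ k) x) = (T ^^ (k + m)) x)" for k
  proof -
    have bnF: "bounded_linear (\<lambda>x. - F x)" using bF by (rule bounded_linear_minus)
    have cSnF: "\<And>x. S (- F x) = - F (S x)" using cSF linear_neg[OF lS] by simp
    have ZnF: "\<And>x. x \<in> Z \<Longrightarrow> - F x \<in> Z" using ZF subZ by (simp add: subspace_neg)
    have nilnF: "\<And>x. x \<in> Z \<Longrightarrow> ((\<lambda>x. - F x) ^^ m) x = 0"
      using neg_funpow[OF lF] nilZ by simp
    obtain \<psi> where \<psi>: "bounded_linear \<psi>" "\<forall>x. \<psi> (S x) = S (\<psi> x)" "\<forall>x\<in>Z. \<psi> x \<in> Z"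
      "\<forall>x\<in>Z. ((\<lambda>x. - F x) ^^ 0) ((T ^^ (k + m)) x) = (S ^^ (k + m + 0 - m)) (\<psi> x)"
      using factor_lemma[of T S "\<lambda>x. - F x" Z m 0 "k + m", OF _ bS bnF cSnF subZ ZS ZnF nilnF]
      by (auto simp: S_def)
    have "\<forall>x\<in>Z. \<psi> ((S ^^ k) x) = (T ^^ (k + m)) x"
    proof
      fix x assume "x \<in> Z"
      then have "(T ^^ (k + m)) x = (S ^^ k) (\<psi> x)" using \<psi>(4) by simp
      also have "\<dots> = \<psi> ((S ^^ k) x)" using comm_funpow1[of \<psi> S k x] \<psi>(2) by simp
      finally show "\<psi> ((S ^^ k) x) = (T ^^ (k + m)) x" by simp
    qed
    then show ?thesis using \<psi>(1) by blast
  qed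

  have clSZ: "closed ((S ^^ (n0 + d + m)) ` Z)" for d
  proof -
    define K where "K = n0 + d + m"
    obtain \<psi> where \<psi>: "bounded_linear \<psi>" "\<forall>x\<in>Z. \<psi> ((S ^^ K) x) = (T ^^ (K + m)) x"
      using factQ[of K] by blast
    have P: "closed ((\<lambda>x. \<psi> ((S ^^ K) x)) ` Z)"
    proof -
      have "(\<lambda>x. \<psi> ((S ^^ K) x)) ` Z = (T ^^ (n0 + (d + m + m))) ` Z"
        using \<psi>(2) unfolding K_def by (auto simp: add.assoc image_iff)
      then show ?thesis using clTZ[of "d + m + m"] by simp
    qed
    have sub1: "subspace {x \<in> Z. \<psi> ((S ^^ K) x) = 0}"
    proof -
      have "{x \<in> Z. \<psi> ((S ^^ K) x) = 0} = Z \<inter> {x. (\<lambda>x. \<psi> ((S ^^ K) x)) x = 0}" by auto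
      moreover have "linear (\<lambda>x. \<psi> ((S ^^ K) x))"
        using bounded_linear.linear[OF bounded_linear_compose[OF \<psi>(1) blS]] .
      ultimately show ?thesis using subZ by (simp add: subspace_inter linear_subspace_kernel)
    qed
    have "(S ^^ K) ` {x \<in> Z. \<psi> ((S ^^ K) x) = 0} \<subseteq> {y \<in> M. (T ^^ (K + m)) y = 0}"
    proof
      fix y assume "y \<in> (S ^^ K) ` {x \<in> Z. \<psi> ((S ^^ K) x) = 0}"
      then obtain x where x: "x \<in> Z" "\<psi> ((S ^^ K) x) = 0" "y = (S ^^ K) x" by blast
      have "y \<in> M" using SZM[of d] x unfolding K_def by blast
      moreover have "(T ^^ (K + m)) y = 0"
      proof -
        have "(T ^^ (K + m)) y = (S ^^ K) ((T ^^ (K + m)) x)"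
          using x(3) comm_funpow2[of T S, OF cST] by simp
        also have "(T ^^ (K + m)) x = 0" using x \<psi>(2) by simp
        finally show ?thesis using linear_0[OF lSk] by simp
      qed
      ultimately show "y \<in> {y \<in> M. (T ^^ (K + m)) y = 0}" by blast
    qed
    then have "fin_dim ((S ^^ K) ` {x \<in> Z. \<psi> ((S ^^ K) x) = 0})"
      using kerTb[of "K + m"] fin_dim_subset by blast
    moreover have "subspace ((S ^^ K) ` {x \<in> Z. \<psi> ((S ^^ K) x) = 0})"
      by (rule linear_subspace_image[OF lSk sub1])
    ultimately have "closed ((S ^^ K) ` {x \<in> Z. \<psi> ((S ^^ K) x) = 0})" by (rule closed_fin_dim)
    then have "closed ((S ^^ K) ` Z)" by (rule closed_transfer[OF clZ subZ blS \<psi>(1) P])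
    then show ?thesis by (simp add: K_def)
  qed
  have rngS: "range (S ^^ k) = psum ((S ^^ k) ` Z) (span ((S ^^ k) ` E0))" for k
  proof
    show "range (S ^^ k) \<subseteq> psum ((S ^^ k) ` Z) (span ((S ^^ k) ` E0))"
    proof
      fix y assume "y \<in> range (S ^^ k)"
      then obtain x where x: "y = (S ^^ k) x" by blast
      have "x \<in> psum Z (span E0)" using ZE0 by simp
      then obtain z e where ze: "z \<in> Z" "e \<in> span E0" "x = z + e" unfolding psum_def by blast
      have "y = (S ^^ k) z + (S ^^ k) e" using x ze linear_add[OF lSk] by simp
      moreover have "(S ^^ k) e \<in> span ((S ^^ k) ` E0)" using ze(2) span_linear_image[OF lSk] by blast
      ultimately show "y \<in> psum ((S ^^ k) ` Z) (span ((S ^^ k) ` E0))" unfolding psum_def using ze(1) by blast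
    qed
    show "psum ((S ^^ k) ` Z) (span ((S ^^ k) ` E0)) \<subseteq> range (S ^^ k)"
    proof
      fix y assume "y \<in> psum ((S ^^ k) ` Z) (span ((S ^^ k) ` E0))"
      then obtain z v where zv: "z \<in> Z" "v \<in> span ((S ^^ k) ` E0)" "y = (S ^^ k) z + v"
        unfolding psum_def by blast
      then obtain e where "v = (S ^^ k) e" using span_linear_image[OF lSk] by blast
      then have "y = (S ^^ k) (z + e)" using zv linear_add[OF lSk] by simp
      then show "y \<in> range (S ^^ k)" by blast
    qed
  qed
  have clRS: "closed (range (S ^^ (n0 + d + m)))" for d
  proof -
    have "subspace ((S ^^ (n0 + d + m)) ` Z)" by (rule linear_subspace_image[OF lSk subZ])
    then show ?thesis unfolding rngS using closed_plus_span[OF finite_imageI[OF E0(1)] clSZ] by blast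
  qed

  define N where "N = n0 + m"
  have kerS: "fin_dim {x \<in> range (S ^^ N). S x = 0}"
  proof -
    have subK: "subspace {x. S x = 0}" by (rule linear_subspace_kernel[OF lS])
    have subA: "subspace ((S ^^ N) ` Z)" by (rule linear_subspace_image[OF lSk subZ])
    have "{x. S x = 0} \<inter> (S ^^ N) ` Z \<subseteq> {y \<in> M. (T ^^ m) y = 0}"
    proof
      fix y assume y: "y \<in> {x. S x = 0} \<inter> (S ^^ N) ` Z"
      then obtain x where x: "x \<in> Z" "y = (S ^^ N) x" by blast
      have "y \<in> M" using SZM[of 0] x unfolding N_def by auto
      moreover have "y \<in> Z" using x funpow_inv[of Z S] ZS by blast
      moreover have "T y + F y = 0" using y by (simp add: S_def)
      ultimately have "(T ^^ m) y = 0" "y \<in> M"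
        using neg_pow_kill[OF bT bF _, of y m] cTF nilZ by auto
      then show "y \<in> {y \<in> M. (T ^^ m) y = 0}" by blast
    qed
    then have "fin_dim ({x. S x = 0} \<inter> (S ^^ N) ` Z)" using kerTb[of m] fin_dim_subset by blast
    then have "fin_dim ({x. S x = 0} \<inter> psum ((S ^^ N) ` Z) (span ((S ^^ N) ` E0)))"
      by (rule fin_dim_Int_psum[OF subK subA _ finite_imageI[OF E0(1)]])
    then show ?thesis unfolding rngS[symmetric] by (rule fin_dim_subset) auto
  qed

  show ?thesis
    unfolding upper_semi_B_fredholm_def upper_semi_fredholm_on_def S_def[symmetric]
  proof (intro exI[of _ N] conjI)
    show "closed (range (S ^^ N))" using clRS[of 0] by (simp add: N_def)
    have e1: "S ` range (S ^^ N) = range (S ^^ Suc N)" by (auto simp: image_iff)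
    have c1: "closed (range (S ^^ Suc N))" using clRS[of 1] by (simp add: N_def)
    have s1: "range (S ^^ Suc N) \<subseteq> range (S ^^ N)"
      by (auto simp: funpow_Suc_right simp del: funpow.simps)
    have "S ` range (S ^^ N) = range (S ^^ N) \<inter> range (S ^^ Suc N)" using e1 s1 by blast
    then show "closedin (top_of_set (range (S ^^ N))) (S ` range (S ^^ N))"
      unfolding closedin_closed using c1 by blast
    show "fin_dim {x \<in> range (S ^^ N). S x = 0}" by (rule kerS)
  qed
qed


end
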